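(* Let $Q=[0,1]^d$, $d\ge2$, with canonical basis $(e_i)_{i=1}^d$, and let $v:\{0,1\}^d\to\mathbb{R}^d$ be given at the vertices of $Q$ such that $v_i(x+e_i)=v_i(x)$ for every $i$ and every $x\in\{0,1\}^d$ with $x_i=0$, and $v_i(x+e_i+e_j)+v_j(x+e_i+e_j)=v_i(x)+v_j(x)$ for every $i\ne j$ and every $x\in\{0,1\}^d$ with $x_i=x_j=0$. Denote also by $v$ the $d$-linear interpolation of these values on $Q$. Then $e(v)=0$ in $Q$ (so that $v$ is affine with skew-symmetric gradient). *)

theory Defs
  imports "HOL-Analysis.Analysis"
begin

definition cube_vertices :: "(real^'n) set" where
  "cube_vertices = {x. \<forall>k. x$k = 0 \<or> x$k = 1}"

definition multilin_interp :: "(real^'n \<Rightarrow> real^'n) \<Rightarrow> real^'n \<Rightarrow> real^'n" where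
  "multilin_interp v y =
     (\<Sum>x\<in>cube_vertices. (\<Prod>k\<in>UNIV. if x$k = 1 then y$k else 1 - y$k) *\<^sub>R v x)"

definition sym_grad :: "(real^'n \<Rightarrow> real^'n) \<Rightarrow> real^'n \<Rightarrow> 'n \<Rightarrow> 'n \<Rightarrow> real" where
  "sym_grad w y i j =
     ((frechet_derivative w (at y) (axis j 1)) $ i + (frechet_derivative w (at y) (axis i 1)) $ j) / 2"

end

theory Submission
  imports Defs
begin

definition ff :: "'n \<Rightarrow> real^'n \<Rightarrow> real^'n \<Rightarrow> real" where
  "ff k x y = (if x$k = 1 then y$k else 1 - y$k)"

definition ff' :: "'n \<Rightarrow> real^'n \<Rightarrow> real^'n \<Rightarrow> real" where
  "ff' k x h = (if x$k = 1 then h$k else - h$k)"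

definition sg :: "'n \<Rightarrow> real^'n \<Rightarrow> real" where
  "sg j x = (if x$j = 1 then 1 else -1)"

definition flip :: "'n \<Rightarrow> real^'n \<Rightarrow> real^'n" where
  "flip i x = (\<chi> k. if k = i then 1 - x$k else x$k)"

lemma flip_nth: "flip i x $ k = (if k = i then 1 - x$k else x$k)"
  by (simp add: flip_def)

lemma flip_V: "x \<in> cube_vertices \<Longrightarrow> flip i x \<in> cube_vertices"
  by (auto simp: cube_vertices_def flip_nth)

lemma flip_flip: "flip i (flip i x) = x"
  by (simp add: vec_eq_iff flip_nth)

lemma flip_comm: "flip i (flip j x) = flip j (flip i x)"
  by (simp add: vec_eq_iff flip_nth)

lemma flip_jij: "flip j (flip i (flip j x)) = flip i x"
  by (simp add: vec_eq_iff flip_nth)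

lemma sum_flip: "(\<Sum>x\<in>cube_vertices. F x) = (\<Sum>x\<in>cube_vertices. F (flip i x))"
  by (rule sum.reindex_bij_witness[where i="flip i" and j="flip i"])
     (auto simp: flip_flip flip_V)

lemma sum_zero_by_inv:
  fixes G :: "real^'n \<Rightarrow> real"
  assumes "\<And>x. x \<in> cube_vertices \<Longrightarrow> G (g x) = - G x"
    and "\<And>x. x \<in> cube_vertices \<Longrightarrow> g (g x) = x"
    and "\<And>x. x \<in> cube_vertices \<Longrightarrow> g x \<in> cube_vertices"
  shows "(\<Sum>x\<in>cube_vertices. G x) = 0"
proof -
  have "(\<Sum>x\<in>cube_vertices. G x) = (\<Sum>x\<in>cube_vertices. G (g x))"
    by (rule sum.reindex_bij_witness[where i=g and j=g]) (auto simp: assms)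
  also have "\<dots> = - (\<Sum>x\<in>cube_vertices. G x)"
    by (simp add: assms sum_negf)
  finally show ?thesis by simp
qed

lemma ff_deriv: "((\<lambda>y. ff k x y) has_derivative ff' k x) (at y)"
proof (cases "x$k = 1")
  case True
  then show ?thesis unfolding ff_def[abs_def] ff'_def[abs_def]
    using bounded_linear_imp_has_derivative[OF bounded_linear_vec_nth[of k]] by simp
next
  case False
  have "((\<lambda>y. 1 - y$k) has_derivative (\<lambda>h. 0 - h$k)) (at y)"
    by (intro derivative_intros bounded_linear_imp_has_derivative bounded_linear_vec_nth)
  then show ?thesis using False unfolding ff_def[abs_def] ff'_def[abs_def] by simp
qed

lemma mi_eq: "multilin_interp v = (\<lambda>y. \<Sum>x\<in>cube_vertices. (\<Prod>k\<in>UNIV. ff k x y) *\<^sub>R v x)"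
  by (simp add: multilin_interp_def[abs_def] ff_def)

lemma mi_deriv: "(multilin_interp v has_derivative
   (\<lambda>h. \<Sum>x\<in>cube_vertices. (\<Sum>k\<in>UNIV. ff' k x h * (\<Prod>k'\<in>UNIV - {k}. ff k' x y)) *\<^sub>R v x)) (at y)"
  unfolding mi_eq
  by (intro has_derivative_sum has_derivative_scaleR_left has_derivative_prod ff_deriv)

definition DD where
  "DD v y j i = (\<Sum>x\<in>cube_vertices. sg j x * (\<Prod>k\<in>UNIV - {j}. ff k x y) * v x $ i)"

lemma fd_eq: fixes v :: "real^'n \<Rightarrow> real^'n" shows "frechet_derivative (multilin_interp v) (at y) (axis j 1) $ i = DD v y j i"
proof -
  have e: "frechet_derivative (multilin_interp v) (at y) =
    (\<lambda>h. \<Sum>x\<in>cube_vertices. (\<Sum>k\<in>UNIV. ff' k x h * (\<Prod>k'\<in>UNIV - {k}. ff k' x y)) *\<^sub>R v x)"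
    using frechet_derivative_at[OF mi_deriv[of v y]] by simp
  have s: "(\<Sum>k\<in>UNIV. ff' k x (axis j 1) * (\<Prod>k'\<in>UNIV - {k}. ff k' x y))
        = sg j x * (\<Prod>k\<in>UNIV - {j}. ff k x y)" for x :: "real^'n"
  proof -
    have "(\<Sum>k\<in>UNIV. ff' k x (axis j 1) * (\<Prod>k'\<in>UNIV - {k}. ff k' x y))
       = (\<Sum>k\<in>UNIV. if k = j then sg j x * (\<Prod>k\<in>UNIV - {j}. ff k x y) else 0)"
      by (rule sum.cong) (auto simp: ff'_def sg_def axis_def)
    then show ?thesis by simp
  qed
  show ?thesis unfolding e DD_def by (simp add: s sum_component)
qed

lemma edge_gen:
  assumes edge: "\<And>i x. x \<in> cube_vertices \<Longrightarrow> x$i = 0 \<Longrightarrow> v (x + axis i 1) $ i = v x $ i"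
    and x: "x \<in> cube_vertices"
  shows "v (flip i x) $ i = v x $ i"
proof -
  have "x$i = 0 \<or> x$i = 1" using x by (auto simp: cube_vertices_def)
  then show ?thesis
  proof
    assume h: "x$i = 0"
    have "flip i x = x + axis i 1" using h by (simp add: vec_eq_iff flip_nth axis_def)
    then show ?thesis using edge[OF x h] by simp
  next
    assume h: "x$i = 1"
    have "x = flip i x + axis i 1" using h by (simp add: vec_eq_iff flip_nth axis_def)
    moreover have "v (flip i x + axis i 1) $ i = v (flip i x) $ i"
      using edge[OF flip_V[OF x], of i] h by (simp add: flip_nth)
    ultimately show ?thesis by simp
  qed
qed

lemma face_gen:
  assumes face: "\<And>i j x. i \<noteq> j \<Longrightarrow> x \<in> cube_vertices \<Longrightarrow> x$i = 0 \<Longrightarrow> x$j = 0 \<Longrightarrow>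
        v (x + axis i 1 + axis j 1) $ i + v (x + axis i 1 + axis j 1) $ j = v x $ i + v x $ j"
    and x: "x \<in> cube_vertices" and ij: "i \<noteq> j" and eq: "x$i = x$j"
  shows "v (flip i (flip j x)) $ i + v (flip i (flip j x)) $ j = v x $ i + v x $ j"
proof -
  have "x$i = 0 \<or> x$i = 1" using x by (auto simp: cube_vertices_def)
  then show ?thesis
  proof
    assume h: "x$i = 0"
    have "flip i (flip j x) = x + axis i 1 + axis j 1" using h eq ij
      by (simp add: vec_eq_iff flip_nth axis_def)
    then show ?thesis using face[OF ij x h] h eq by simp
  next
    assume h: "x$i = 1"
    let ?w = "flip i (flip j x)"
    have w: "?w \<in> cube_vertices" using x by (simp add: flip_V)
    have "x = ?w + axis i 1 + axis j 1" using h eq ij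
      by (simp add: vec_eq_iff flip_nth axis_def)
    moreover have "v (?w + axis i 1 + axis j 1) $ i + v (?w + axis i 1 + axis j 1) $ j
        = v ?w $ i + v ?w $ j"
      using face[OF ij w] h eq ij by (simp add: flip_nth)
    ultimately show ?thesis by simp
  qed
qed


lemma V01: "x \<in> cube_vertices \<Longrightarrow> x$k = 0 \<or> x$k = 1"
  by (auto simp: cube_vertices_def)

lemma ff_flip_other: "k \<noteq> i \<Longrightarrow> ff k (flip i x) y = ff k x y"
  by (simp add: ff_def flip_nth)

lemma ff_flip_same: "x \<in> cube_vertices \<Longrightarrow> ff i (flip i x) y = 1 - ff i x y"
  using V01[of x i] by (auto simp: ff_def flip_nth)

lemma sg_flip_other: "k \<noteq> i \<Longrightarrow> sg k (flip i x) = sg k x"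
  by (simp add: sg_def flip_nth)

lemma sg_flip_same: "x \<in> cube_vertices \<Longrightarrow> sg i (flip i x) = - sg i x"
  using V01[of x i] by (auto simp: sg_def flip_nth)

lemma prod_flip_other: "i \<notin> S \<Longrightarrow> (\<Prod>k\<in>S. ff k (flip i x) y) = (\<Prod>k\<in>S. ff k x y)"
  by (rule prod.cong) (auto, metis ff_flip_other)

lemma DD_diag:
  assumes edge: "\<And>i x. x \<in> cube_vertices \<Longrightarrow> x$i = 0 \<Longrightarrow> v (x + axis i 1) $ i = v x $ i"
  shows "DD v y i i = 0"
  unfolding DD_def
  by (rule sum_zero_by_inv[where g="flip i"])
     (auto simp: sg_flip_same prod_flip_other edge_gen[OF edge] flip_flip flip_V)

lemma arith3:
  fixes s f A w :: real
  shows "s * (f * A) * w + s * ((1 - f) * A) * w = s * A * w"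
  by (simp add: algebra_simps)

lemma DD_half:
  fixes v :: "real^'n \<Rightarrow> real^'n"
  assumes edge: "\<And>i x. x \<in> cube_vertices \<Longrightarrow> x$i = 0 \<Longrightarrow> v (x + axis i 1) $ i = v x $ i"
    and ij: "i \<noteq> j"
  shows "2 * DD v y j i = (\<Sum>x\<in>cube_vertices. sg j x * (\<Prod>k\<in>UNIV - {i,j}. ff k x y) * v x $ i)"
proof -
  let ?A = "\<lambda>x. (\<Prod>k\<in>UNIV - {i,j}. ff k x y)"
  let ?F = "\<lambda>x. sg j x * (\<Prod>k\<in>UNIV - {j}. ff k x y) * v x $ i"
  have P: "(\<Prod>k\<in>UNIV - {j}. ff k x y) = ff i x y * ?A x" for x :: "real^'n"
  proof -
    have "(\<Prod>k\<in>UNIV - {j}. ff k x y) = ff i x y * (\<Prod>k\<in>UNIV - {j} - {i}. ff k x y)"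
      by (rule prod.remove) (use ij in auto)
    moreover have "UNIV - {j} - {i} = UNIV - {i,j}" by auto
    ultimately show ?thesis by simp
  qed
  have A: "?A (flip i x) = ?A x" for x :: "real^'n" by (rule prod_flip_other) auto
  have "2 * DD v y j i = (\<Sum>x\<in>cube_vertices. ?F x) + (\<Sum>x\<in>cube_vertices. ?F (flip i x))"
    unfolding DD_def using sum_flip[of ?F i] by simp
  also have "\<dots> = (\<Sum>x\<in>cube_vertices. ?F x + ?F (flip i x))"
    by (simp add: sum.distrib)
  also have "\<dots> = (\<Sum>x\<in>cube_vertices. sg j x * ?A x * v x $ i)"
  proof (rule sum.cong)
    fix x :: "real^'n" assume x: "x \<in> cube_vertices"
    have h: "?F (flip i x) = sg j x * ((1 - ff i x y) * ?A x) * v x $ i"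
      using ij by (simp add: P A sg_flip_other ff_flip_same[OF x] edge_gen[OF edge x])
    have h0: "?F x = sg j x * (ff i x y * ?A x) * v x $ i" by (simp only: P)
    show "?F x + ?F (flip i x) = sg j x * ?A x * v x $ i"
      by (simp only: h h0 arith3)
  qed simp
  finally show ?thesis .
qed

lemma arith1:
  fixes a s p q p' q' :: real
  assumes "p' + q' = p + q"
  shows "a * (- s * p' + - s * q') = - (a * (s * p + s * q))"
proof -
  have "a * s * (p' + q') = a * s * (p + q)" using assms by simp
  then show ?thesis by (simp add: algebra_simps)
qed

lemma arith2:
  fixes a s p q p' q' :: real
  assumes "p' + q = p + q'"
  shows "a * (- s * p' + - (- s) * q') = - (a * (s * p + - s * q))"
proof -
  have "a * s * (p' + q) = a * s * (p + q')" using assms by simp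
  then show ?thesis by (simp add: algebra_simps)
qed

lemma DD_off:
  fixes v :: "real^'n \<Rightarrow> real^'n"
  assumes edge: "\<And>i x. x \<in> cube_vertices \<Longrightarrow> x$i = 0 \<Longrightarrow> v (x + axis i 1) $ i = v x $ i"
    and face: "\<And>i j x. i \<noteq> j \<Longrightarrow> x \<in> cube_vertices \<Longrightarrow> x$i = 0 \<Longrightarrow> x$j = 0 \<Longrightarrow>
        v (x + axis i 1 + axis j 1) $ i + v (x + axis i 1 + axis j 1) $ j = v x $ i + v x $ j"
    and ij: "i \<noteq> j"
  shows "DD v y j i + DD v y i j = 0"
proof -
  let ?A = "\<lambda>x. (\<Prod>k\<in>UNIV - {i,j}. ff k x y)"
  let ?g = "\<lambda>x. flip i (flip j x)"
  let ?G = "\<lambda>x. ?A x * (sg j x * v x $ i + sg i x * v x $ j)"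
  have e: "UNIV - {j,i} = UNIV - {i,j}" by auto
  have h1: "2 * DD v y j i = (\<Sum>x\<in>cube_vertices. sg j x * ?A x * v x $ i)"
    by (rule DD_half[OF edge ij])
  have h2: "2 * DD v y i j = (\<Sum>x\<in>cube_vertices. sg i x * ?A x * v x $ j)"
    using DD_half[OF edge ij[symmetric], of y] unfolding e .
  have h3: "(\<Sum>x\<in>cube_vertices. ?G x) = (\<Sum>x\<in>cube_vertices. sg j x * ?A x * v x $ i)
      + (\<Sum>x\<in>cube_vertices. sg i x * ?A x * v x $ j)"
    unfolding sum.distrib[symmetric] by (rule sum.cong) (simp_all add: distrib_left)
  have "2 * (DD v y j i + DD v y i j) = 2 * DD v y j i + 2 * DD v y i j" by simp
  also have "\<dots> = (\<Sum>x\<in>cube_vertices. ?G x)" unfolding h1 h2 h3 ..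
  also have "\<dots> = 0"
  proof (rule sum_zero_by_inv[where g="?g"])
    fix x :: "real^'n" assume x: "x \<in> cube_vertices"
    show "?g (?g x) = x" by (simp add: vec_eq_iff flip_nth)
  next
    fix x :: "real^'n" assume x: "x \<in> cube_vertices"
    show "?g x \<in> cube_vertices" using x by (simp add: flip_V)
  next
    fix x :: "real^'n" assume x: "x \<in> cube_vertices"
    have A: "?A (?g x) = ?A x"
    proof -
      have "?A (?g x) = (\<Prod>k\<in>UNIV-{i,j}. ff k (flip j x) y)" by (rule prod_flip_other) simp
      also have "\<dots> = ?A x" by (rule prod_flip_other) simp
      finally show ?thesis .
    qed
    have si: "sg i (?g x) = - sg i x"
      using sg_flip_same[OF flip_V[OF x], of i j] sg_flip_other[OF ij, of x] by simp
    have sj: "sg j (?g x) = - sg j x"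
      using sg_flip_other[OF ij[symmetric], of "flip j x"] sg_flip_same[OF x, of j] by simp
    show "?G (?g x) = - ?G x"
    proof (cases "x$i = x$j")
      case True
      have f: "v (?g x) $ i + v (?g x) $ j = v x $ i + v x $ j"
        by (rule face_gen[OF face x ij True])
      have s: "sg i x = sg j x" using True by (simp add: sg_def)
      show ?thesis unfolding A si sj s using f by (rule arith1)
    next
      case False
      let ?u = "flip i x" and ?w = "flip j x"
      have u: "?u \<in> cube_vertices" using x by (simp add: flip_V)
      have uij: "?u$i = ?u$j" using False V01[OF x, of i] V01[OF x, of j] ij
        by (simp add: flip_nth) linarith
      have gu: "?g ?u = ?w" by (simp add: vec_eq_iff flip_nth)
      have f: "v ?w $ i + v ?w $ j = v ?u $ i + v ?u $ j"
        using face_gen[OF face u ij uij] unfolding gu .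
      have a1: "v x $ i = v ?u $ i" using edge_gen[OF edge x, of i] by simp
      have a2: "v x $ j = v ?w $ j" using edge_gen[OF edge x, of j] by simp
      have a3: "v (?g x) $ i = v ?w $ i"
        using edge_gen[OF edge flip_V[OF flip_V[OF x, of j], of i], of i] by (simp add: flip_flip)
      have a4: "v (?g x) $ j = v ?u $ j"
        using edge_gen[OF edge flip_V[OF flip_V[OF x, of j], of i], of j]
          flip_jij[of j i x] by simp
      have s: "sg i x = - sg j x" using False V01[OF x, of i] V01[OF x, of j]
        by (auto simp: sg_def)
      show ?thesis unfolding A si sj s a1 a2 a3 a4 using f by (rule arith2)
    qed
  qed
  finally show ?thesis by simp
qed

theorem lemmaA1:
  fixes v :: "real^'n \<Rightarrow> real^'n"
  assumes d2: "CARD('n) \<ge> 2"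
    and edge: "\<And>i x. x \<in> cube_vertices \<Longrightarrow> x$i = 0 \<Longrightarrow> v (x + axis i 1) $ i = v x $ i"
    and face: "\<And>i j x. i \<noteq> j \<Longrightarrow> x \<in> cube_vertices \<Longrightarrow> x$i = 0 \<Longrightarrow> x$j = 0 \<Longrightarrow>
        v (x + axis i 1 + axis j 1) $ i + v (x + axis i 1 + axis j 1) $ j = v x $ i + v x $ j"
  shows "\<forall>y\<in>cbox 0 1. multilin_interp v differentiable (at y) \<and>
           (\<forall>i j. sym_grad (multilin_interp v) y i j = 0)"
proof (intro ballI conjI allI)
  fix y :: "real^'n"
  show "multilin_interp v differentiable (at y)"
    using mi_deriv[of v y] by (auto simp: differentiable_def)
  fix i j
  show "sym_grad (multilin_interp v) y i j = 0"
  proof (cases "i = j")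
    case True
    then show ?thesis by (simp add: sym_grad_def fd_eq DD_diag[OF edge])
  next
    case False
    then show ?thesis by (simp add: sym_grad_def fd_eq DD_off[OF edge face False])
  qed
qed

end
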